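(* Let $IS\in\{\Box,\blacksquare\}^2$ and let $\tau$ be a correct compositional translation from $\mathrm{SYNCSIMPLE}$ into $\mathrm{LOCKSIMPLE}_{2,IS}$ of blocking type $(P_1P_1,P_2P_2)$. Then $\tau(!)$ does not start with $P_1$.
   Context: $\mathrm{SYNCSIMPLE}$: subprocesses $\mathcal{U} ::= \checkmark \mid 0 \mid\, !\mathcal{U} \mid\, ?\mathcal{U}$; processes are finite parallel compositions ($\mid$ associative, commutative, $0$ a unit). Reduction: $!\mathcal{U}_1\mid ?\mathcal{U}_2\mid \mathcal{P}\to \mathcal{U}_1\mid\mathcal{U}_2\mid\mathcal{P}$. Successful: of form $\checkmark\mid\mathcal{P}$; may-convergent: reduces to a successful process; must-convergent: every reachable process is may-convergent. $\mathrm{LOCKSIMPLE}_{k,IS}$ ($IS\in\{\Box,\blacksquare\}^k$, $\Box$ empty, $\blacksquare$ full): subprocesses are words over $\{P_1,T_1,\dots,P_k,T_k\}$ followed by $0$ or $\checkmark$; states $(\mathcal{P},C)$ reduce by $(P_i\mathcal{U}\mid\mathcal{P},C)\to(\mathcal{U}\mid\mathcal{P},C[C_i:=\blacksquare])$ only if $C_i=\Box$, and $(T_i\mathcal{U}\mid\mathcal{P},C)\to(\mathcal{U}\mid\mathcal{P},C[C_i:=\Box])$ always. Success = process contains $\checkmark$; a process $\mathcal{P}$ is may/must-convergent iff the state $(\mathcal{P},IS)$ is. A compositional translation $\tau$ is given by words $\tau(!),\tau(?)$ with $\tau(0)=0$, $\tau(\checkmark)=\checkmark$, $\tau(!\mathcal{U})=\tau(!)\tau(\mathcal{U})$,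 $\tau(?\mathcal{U})=\tau(?)\tau(\mathcal{U})$, $\tau$ commuting with $\mid$; correct = preserves and reflects may- and must-convergence. Blocking type of a word $S$: execute $S$ alone from $IS$; if it gets stuck at an occurrence of $P_i$ that is the first symbol from $\{P_i,T_i\}$ in $S$ the type is $P_i$, if stuck at a later occurrence of $P_i$ the type is $P_iP_i$; $\tau$ has blocking type $(W_1,W_2)$ if $\tau(!)$ has type $W_1$ and $\tau(?)$ type $W_2$. *)

theory Defs
  imports Main "HOL-Library.Multiset"
begin

datatype ssub = SCheck | SZero | SSend ssub | SRecv ssub

text \<open>Processes are finite parallel compositions, i.e. multisets of subprocesses
  (associativity/commutativity of parallel composition is built in; a 0 component
  has no effect on reduction or success).\<close>
type_synonym sproc = "ssub multiset"

inductive sync_step :: "sproc \<Rightarrow> sproc \<Rightarrow> bool" where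
  "sync_step (add_mset (SSend u1) (add_mset (SRecv u2) P)) (add_mset u1 (add_mset u2 P))"

definition sync_successful :: "sproc \<Rightarrow> bool" where
  "sync_successful P \<longleftrightarrow> SCheck \<in># P"

definition sync_may :: "sproc \<Rightarrow> bool" where
  "sync_may P \<longleftrightarrow> (\<exists>Q. sync_step\<^sup>*\<^sup>* P Q \<and> sync_successful Q)"

definition sync_must :: "sproc \<Rightarrow> bool" where
  "sync_must P \<longleftrightarrow> (\<forall>Q. sync_step\<^sup>*\<^sup>* P Q \<longrightarrow> sync_may Q)"

text \<open>Symbols \<open>LP i\<close> (= P_i) and \<open>LT i\<close> (= T_i) with lock index i (1-based).
  Lock contents: True = full, False = empty.\<close>
datatype lsym = LP nat | LT nat

text \<open>A subprocess is a word followed by 0 (False) or the success symbol (True).\<close>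
type_synonym lsub = "lsym list \<times> bool"
type_synonym lproc = "lsub multiset"
type_synonym locks = "nat \<Rightarrow> bool"

definition word_over :: "nat \<Rightarrow> lsym list \<Rightarrow> bool" where
  "word_over k w \<longleftrightarrow> (\<forall>s \<in> set w. s \<in> {LP i | i. 1 \<le> i \<and> i \<le> k} \<union> {LT i | i. 1 \<le> i \<and> i \<le> k})"

inductive lock_step :: "lproc \<times> locks \<Rightarrow> lproc \<times> locks \<Rightarrow> bool" where
  put: "\<not> C i \<Longrightarrow> lock_step (add_mset (LP i # w, b) P, C) (add_mset (w, b) P, C(i := True))"
| take: "lock_step (add_mset (LT i # w, b) P, C) (add_mset (w, b) P, C(i := False))"

definition lock_successful :: "lproc \<times> locks \<Rightarrow> bool" where
  "lock_successful S \<longleftrightarrow> ([], True) \<in># fst S"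

definition lock_may_state :: "lproc \<times> locks \<Rightarrow> bool" where
  "lock_may_state S \<longleftrightarrow> (\<exists>S'. lock_step\<^sup>*\<^sup>* S S' \<and> lock_successful S')"

definition lock_must_state :: "lproc \<times> locks \<Rightarrow> bool" where
  "lock_must_state S \<longleftrightarrow> (\<forall>S'. lock_step\<^sup>*\<^sup>* S S' \<longrightarrow> lock_may_state S')"

definition lock_may :: "locks \<Rightarrow> lproc \<Rightarrow> bool" where
  "lock_may IS P \<longleftrightarrow> lock_may_state (P, IS)"

definition lock_must :: "locks \<Rightarrow> lproc \<Rightarrow> bool" where
  "lock_must IS P \<longleftrightarrow> lock_must_state (P, IS)"

fun tr_sub :: "lsym list \<Rightarrow> lsym list \<Rightarrow> ssub \<Rightarrow> lsub" where
  "tr_sub ws wr SCheck = ([], True)"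
| "tr_sub ws wr SZero = ([], False)"
| "tr_sub ws wr (SSend u) = (ws @ fst (tr_sub ws wr u), snd (tr_sub ws wr u))"
| "tr_sub ws wr (SRecv u) = (wr @ fst (tr_sub ws wr u), snd (tr_sub ws wr u))"

definition tr :: "lsym list \<Rightarrow> lsym list \<Rightarrow> sproc \<Rightarrow> lproc" where
  "tr ws wr P = image_mset (tr_sub ws wr) P"

text \<open>Translation given by words ws = tau(!) and wr = tau(?) into LOCKSIMPLE_{k,IS}
  is correct iff it preserves and reflects may- and must-convergence.\<close>
definition correct_translation :: "nat \<Rightarrow> locks \<Rightarrow> lsym list \<Rightarrow> lsym list \<Rightarrow> bool" where
  "correct_translation k IS ws wr \<longleftrightarrow>
     word_over k ws \<and> word_over k wr \<and>
     (\<forall>P. (sync_may P \<longleftrightarrow> lock_may IS (tr ws wr P)) \<and>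
          (sync_must P \<longleftrightarrow> lock_must IS (tr ws wr P)))"

text \<open>Deterministic execution of a word alone: None = gets stuck.\<close>
fun exec_word :: "locks \<Rightarrow> lsym list \<Rightarrow> locks option" where
  "exec_word C [] = Some C"
| "exec_word C (LP i # w) = (if C i then None else exec_word (C(i := True)) w)"
| "exec_word C (LT i # w) = exec_word (C(i := False)) w"

definition stuck_at :: "locks \<Rightarrow> lsym list \<Rightarrow> nat \<Rightarrow> nat \<Rightarrow> bool" where
  "stuck_at IS S j i \<longleftrightarrow> j < length S \<and> S ! j = LP i \<and>
     (\<exists>C. exec_word IS (take j S) = Some C \<and> C i)"

datatype btype = BT_P nat | BT_PP nat

definition has_btype :: "locks \<Rightarrow> lsym list \<Rightarrow> btype \<Rightarrow> bool" where
  "has_btype IS S t \<longleftrightarrow> (case t of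
      BT_P i \<Rightarrow> \<exists>j. stuck_at IS S j i \<and> (\<forall>l<j. S ! l \<noteq> LP i \<and> S ! l \<noteq> LT i)
    | BT_PP i \<Rightarrow> \<exists>j. stuck_at IS S j i \<and> (\<exists>l<j. S ! l = LP i \<or> S ! l = LT i))"

end

theory Submission
  imports Defs
begin


lemma exec_append: "exec_word C (u @ v) = (case exec_word C u of None \<Rightarrow> None | Some C' \<Rightarrow> exec_word C' v)"
  by (induction C u rule: exec_word.induct) (auto simp: fun_upd_def)

lemma exec_stuck: "exec_word C w = None \<Longrightarrow> \<exists>m C' i. m < length w \<and> exec_word C (take m w) = Some C' \<and> w ! m = LP i \<and> C' i"
proof (induction w arbitrary: C)
  case Nil then show ?case by simp
next
  case (Cons x w)
  show ?case
  proof (cases x)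
    case (LP i)
    show ?thesis
    proof (cases "C i")
      case True then show ?thesis using LP by (intro exI[of _ 0]) auto
    next
      case False
      have "exec_word (C(i := True)) w = None" using Cons.prems LP False by simp
      then obtain m C' l where "m < length w" "exec_word (C(i := True)) (take m w) = Some C'" "w ! m = LP l" "C' l"
        using Cons.IH by blast
      with False LP show ?thesis by (intro exI[of _ "Suc m"]) auto
    qed
  next
    case (LT i)
    have "exec_word (C(i := False)) w = None" using Cons.prems LT by simp
    then obtain m C' l where "m < length w" "exec_word (C(i := False)) (take m w) = Some C'" "w ! m = LP l" "C' l"
      using Cons.IH by blast
    with LT show ?thesis by (intro exI[of _ "Suc m"]) auto
  qed
qed

lemma exec_nosym: "exec_word C u = Some C' \<Longrightarrow> (\<forall>x\<in>set u. x \<noteq> LP i \<and> x \<noteq> LT i) \<Longrightarrow> C' i = C i"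
  by (induction C u rule: exec_word.induct) (auto simp: fun_upd_def split: if_splits)

lemma exec_lastsym: "exec_word S u = Some C \<Longrightarrow> exec_word S' u = Some C' \<Longrightarrow> (LP i \<in> set u \<or> LT i \<in> set u) \<Longrightarrow> C i = C' i"
proof (induction u arbitrary: S S')
  case Nil then show ?case by simp
next
  case (Cons x u)
  show ?case
  proof (cases "LP i \<in> set u \<or> LT i \<in> set u")
    case True
    with Cons show ?thesis by (cases x) (auto split: if_splits)
  next
    case False
    then have ns: "\<forall>y\<in>set u. y \<noteq> LP i \<and> y \<noteq> LT i" by auto
    from False Cons.prems(3) have "x = LP i \<or> x = LT i" by auto
    then show ?thesis
    proof
      assume x: "x = LP i"
      with Cons.prems have "exec_word (S(i:=True)) u = Some C" "exec_word (S'(i:=True)) u = Some C'"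
        by (auto split: if_splits)
      then have "C i = (S(i:=True)) i" "C' i = (S'(i:=True)) i" using exec_nosym[OF _ ns] by blast+
      then show ?thesis by simp
    next
      assume x: "x = LT i"
      with Cons.prems have "exec_word (S(i:=False)) u = Some C" "exec_word (S'(i:=False)) u = Some C'"
        by auto
      then have "C i = (S(i:=False)) i" "C' i = (S'(i:=False)) i" using exec_nosym[OF _ ns] by blast+
      then show ?thesis by simp
    qed
  qed
qed

lemma exec_prefix: "exec_word S (take k w) = Some C \<Longrightarrow> m \<le> k \<Longrightarrow> \<exists>C'. exec_word S (take m w) = Some C'"
proof -
  assume a: "exec_word S (take k w) = Some C" "m \<le> k"
  have "take k w = take m w @ take (k - m) (drop m w)"
    using a(2) by (metis le_add_diff_inverse take_add)
  with a(1) show ?thesis by (auto simp: exec_append split: option.splits)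
qed

lemma exec_block: "exec_word S (take m w) = Some C \<Longrightarrow> m < length w \<Longrightarrow> w!m = LP i \<Longrightarrow> C i \<Longrightarrow> exec_word S (take (Suc m) w) = None"
  by (simp add: take_Suc_conv_app_nth exec_append)

lemma run: "exec_word C u = Some C' \<Longrightarrow> lock_step\<^sup>*\<^sup>* (add_mset (u @ v, b) P, C) (add_mset (v, b) P, C')"
proof (induction u arbitrary: C)
  case Nil then show ?case by simp
next
  case (Cons x w)
  show ?case
  proof (cases x)
    case (LP i)
    with Cons.prems have ci: "\<not> C i" and r: "exec_word (C(i:=True)) w = Some C'" by (auto split: if_splits)
    have st: "lock_step (add_mset (LP i # (w @ v), b) P, C) (add_mset (w @ v, b) P, C(i:=True))"
      using ci by (rule lock_step.put)
    have IH: "lock_step\<^sup>*\<^sup>* (add_mset (w @ v, b) P, C(i:=True)) (add_mset (v, b) P, C')"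
      by (rule Cons.IH[OF r])
    show ?thesis using converse_rtranclp_into_rtranclp[OF st IH] LP by simp
  next
    case (LT i)
    with Cons.prems have r: "exec_word (C(i:=False)) w = Some C'" by auto
    have st: "lock_step (add_mset (LT i # (w @ v), b) P, C) (add_mset (w @ v, b) P, C(i:=False))"
      by (rule lock_step.take)
    have IH: "lock_step\<^sup>*\<^sup>* (add_mset (w @ v, b) P, C(i:=False)) (add_mset (v, b) P, C')"
      by (rule Cons.IH[OF r])
    show ?thesis using converse_rtranclp_into_rtranclp[OF st IH] LT by simp
  qed
qed

lemma run2A: "exec_word C u = Some C' \<Longrightarrow> lock_step\<^sup>*\<^sup>* ({#(u @ v, b), y#}, C) ({#(v, b), y#}, C')"
  using run[of C u C' v b "{#y#}"] by simp

lemma run2B: "exec_word C u = Some C' \<Longrightarrow> lock_step\<^sup>*\<^sup>* ({#x, (u @ v, b)#}, C) ({#x, (v, b)#}, C')"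
  using run[of C u C' v b "{#x#}"] by (simp add: add_mset_commute)

lemma no_step: "C i \<Longrightarrow> C i' \<Longrightarrow> \<not> lock_step ({#(LP i # u, b), (LP i' # u', b')#}, C) S"
proof
  assume ci: "C i" "C i'" and st: "lock_step ({#(LP i # u, b), (LP i' # u', b')#}, C) S"
  from st show False
  proof (cases rule: lock_step.cases)
    case (put l w b0 P)
    have "(LP l # w, b0) \<in># {#(LP i # u, b), (LP i' # u', b')#}"
      by (subst put(1)) simp
    then have "l = i \<or> l = i'" by auto
    with put(3) ci show ?thesis by auto
  next
    case (take l w b0 P)
    have "(LT l # w, b0) \<in># {#(LP i # u, b), (LP i' # u', b')#}"
      by (subst take(1)) simp
    then show ?thesis by auto
  qed
qed

lemma terminal: "C i \<Longrightarrow> C i' \<Longrightarrow> \<not> lock_may_state ({#(LP i # u, b), (LP i' # u', b')#}, C)"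
proof
  assume ci: "C i" "C i'" and m: "lock_may_state ({#(LP i # u, b), (LP i' # u', b')#}, C)"
  then obtain S' where r: "lock_step\<^sup>*\<^sup>* ({#(LP i # u, b), (LP i' # u', b')#}, C) S'" and s: "lock_successful S'"
    unfolding lock_may_state_def by auto
  from r have "S' = ({#(LP i # u, b), (LP i' # u', b')#}, C)"
    by (cases rule: converse_rtranclpE) (use no_step[OF ci] in auto)
  with s show False by (simp add: lock_successful_def)
qed

lemma term_gen: "lock_must IS P0 \<Longrightarrow> lock_step\<^sup>*\<^sup>* (P0, IS) ({#(LP i # u, b), (LP i' # u', b')#}, C) \<Longrightarrow> C i \<Longrightarrow> C i' \<Longrightarrow> False"
  using terminal unfolding lock_must_def lock_must_state_def by blast

lemma sync_must_gen:
  assumes "\<And>Q. sync_step P Q \<Longrightarrow> Q = QQ" "\<And>Q. \<not> sync_step QQ Q" "SCheck \<in># QQ" "sync_step P QQ"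
  shows "sync_must P"
  unfolding sync_must_def
proof (intro allI impI)
  fix Q assume "sync_step\<^sup>*\<^sup>* P Q"
  then show "sync_may Q"
  proof (cases rule: converse_rtranclpE)
    case base then show ?thesis using assms unfolding sync_may_def sync_successful_def by blast
  next
    case (step P')
    then have "P' = QQ" using assms(1) by blast
    with step(2) have "Q = QQ" by (cases rule: converse_rtranclpE) (use assms(2) in auto)
    then show ?thesis using assms(3) unfolding sync_may_def sync_successful_def by blast
  qed
qed

lemma sync_step_cases: "sync_step P Q \<Longrightarrow> \<exists>u1 u2 R. P = add_mset (SSend u1) (add_mset (SRecv u2) R) \<and> Q = add_mset u1 (add_mset u2 R)"
  by (cases rule: sync_step.cases) auto


lemma sync_two: "sync_step {#SSend a, SRecv c#} Q \<Longrightarrow> Q = {#a, c#}"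
proof -
  assume "sync_step {#SSend a, SRecv c#} Q"
  then obtain u1 u2 R where P: "{#SSend a, SRecv c#} = add_mset (SSend u1) (add_mset (SRecv u2) R)"
    and Q: "Q = add_mset u1 (add_mset u2 R)"
    using sync_step_cases by blast
  have "SSend u1 \<in># {#SSend a, SRecv c#}" by (subst P) simp
  then have u1: "u1 = a" by simp
  have "SRecv u2 \<in># {#SSend a, SRecv c#}" by (subst P) simp
  then have u2: "u2 = c" by simp
  from P have "R = {#}" unfolding u1 u2 by simp
  with Q u1 u2 show ?thesis by simp
qed

lemma sync_step_mem: "sync_step Q Q' \<Longrightarrow> (\<exists>u. SSend u \<in># Q) \<and> (\<exists>u. SRecv u \<in># Q)"
  by (cases rule: sync_step.cases) auto

lemma must_test: 
  assumes "\<And>Q. \<not> sync_step {#a, c#} Q" "SCheck \<in># {#a, c#}"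
  shows "sync_must {#SSend a, SRecv c#}"
  apply (rule sync_must_gen[where QQ="{#a, c#}"])
  using sync_two assms apply auto[3]
  using sync_step.intros[of a c "{#}"] by simp

lemma mustA: "sync_must {#SSend SCheck, SRecv (SSend SCheck)#}"
  by (rule must_test) (auto dest: sync_step_mem)
lemma mustB: "sync_must {#SSend (SRecv SZero), SRecv SCheck#}"
  by (rule must_test) (auto dest: sync_step_mem)
lemma mustC: "sync_must {#SSend SZero, SRecv SCheck#}"
  by (rule must_test) (auto dest: sync_step_mem)



definition RR :: "lsym list \<Rightarrow> lsym list \<Rightarrow> locks \<Rightarrow> nat \<Rightarrow> nat \<Rightarrow> locks \<Rightarrow> bool" where
  "RR ws wr IS p q C \<longleftrightarrow> p \<le> length ws \<and> q \<le> length wr \<and>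
    (\<forall>\<alpha> \<beta> ba bb. lock_step\<^sup>*\<^sup>* ({#(ws @ \<alpha>, ba), (wr @ \<beta>, bb)#}, IS) ({#(drop p ws @ \<alpha>, ba), (drop q wr @ \<beta>, bb)#}, C))"

lemma RR0: "RR ws wr IS 0 0 IS"
  unfolding RR_def by simp

lemma RR_A:
  assumes R: "RR ws wr IS p q C" and e: "exec_word C (take m (drop p ws)) = Some C'" and le: "p + m \<le> length ws"
  shows "RR ws wr IS (p + m) q C'"
  unfolding RR_def
proof (intro conjI allI)
  show "p + m \<le> length ws" by fact
  show "q \<le> length wr" using R unfolding RR_def by simp
  fix \<alpha> \<beta> ba bb
  have r1: "lock_step\<^sup>*\<^sup>* ({#(ws @ \<alpha>, ba), (wr @ \<beta>, bb)#}, IS) ({#(drop p ws @ \<alpha>, ba), (drop q wr @ \<beta>, bb)#}, C)"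
    using R unfolding RR_def by blast
  have eq: "drop p ws @ \<alpha> = take m (drop p ws) @ (drop (p + m) ws @ \<alpha>)"
    by (metis append.assoc append_take_drop_id drop_drop add.commute)
  have r2: "lock_step\<^sup>*\<^sup>* ({#(drop p ws @ \<alpha>, ba), (drop q wr @ \<beta>, bb)#}, C) ({#(drop (p + m) ws @ \<alpha>, ba), (drop q wr @ \<beta>, bb)#}, C')"
    unfolding eq by (rule run2A[OF e])
  show "lock_step\<^sup>*\<^sup>* ({#(ws @ \<alpha>, ba), (wr @ \<beta>, bb)#}, IS) ({#(drop (p + m) ws @ \<alpha>, ba), (drop q wr @ \<beta>, bb)#}, C')"
    using r1 r2 by (rule rtranclp_trans)
qed

lemma RR_B:
  assumes R: "RR ws wr IS p q C" and e: "exec_word C (take m (drop q wr)) = Some C'" and le: "q + m \<le> length wr"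
  shows "RR ws wr IS p (q + m) C'"
  unfolding RR_def
proof (intro conjI allI)
  show "q + m \<le> length wr" by fact
  show "p \<le> length ws" using R unfolding RR_def by simp
  fix \<alpha> \<beta> ba bb
  have r1: "lock_step\<^sup>*\<^sup>* ({#(ws @ \<alpha>, ba), (wr @ \<beta>, bb)#}, IS) ({#(drop p ws @ \<alpha>, ba), (drop q wr @ \<beta>, bb)#}, C)"
    using R unfolding RR_def by blast
  have eq: "drop q wr @ \<beta> = take m (drop q wr) @ (drop (q + m) wr @ \<beta>)"
    by (metis append.assoc append_take_drop_id drop_drop add.commute)
  have r2: "lock_step\<^sup>*\<^sup>* ({#(drop p ws @ \<alpha>, ba), (drop q wr @ \<beta>, bb)#}, C) ({#(drop p ws @ \<alpha>, ba), (drop (q + m) wr @ \<beta>, bb)#}, C')"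
    unfolding eq by (rule run2B[OF e])
  show "lock_step\<^sup>*\<^sup>* ({#(ws @ \<alpha>, ba), (wr @ \<beta>, bb)#}, IS) ({#(drop p ws @ \<alpha>, ba), (drop (q + m) wr @ \<beta>, bb)#}, C')"
    using r1 r2 by (rule rtranclp_trans)
qed

lemma RR_reach:
  "RR ws wr IS p q C \<Longrightarrow> lock_step\<^sup>*\<^sup>* ({#(ws @ \<alpha>, ba), (wr @ \<beta>, bb)#}, IS) ({#(drop p ws @ \<alpha>, ba), (drop q wr @ \<beta>, bb)#}, C)"
  unfolding RR_def by blast

lemma termR:
  assumes M: "lock_must IS {#(ws @ \<alpha>, ba), (wr @ \<beta>, bb)#}" and R: "RR ws wr IS p q C"
    and "p < length ws" "q < length wr" "ws ! p = LP i" "wr ! q = LP i'" "C i" "C i'"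
  shows False
proof -
  have "lock_step\<^sup>*\<^sup>* ({#(ws @ \<alpha>, ba), (wr @ \<beta>, bb)#}, IS) ({#(drop p ws @ \<alpha>, ba), (drop q wr @ \<beta>, bb)#}, C)"
    by (rule RR_reach[OF R])
  moreover have "drop p ws = LP i # drop (Suc p) ws" "drop q wr = LP i' # drop (Suc q) wr"
    using assms by (metis Cons_nth_drop_Suc)+
  ultimately have "lock_step\<^sup>*\<^sup>* ({#(ws @ \<alpha>, ba), (wr @ \<beta>, bb)#}, IS) ({#(LP i # (drop (Suc p) ws @ \<alpha>), ba), (LP i' # (drop (Suc q) wr @ \<beta>), bb)#}, C)"
    by simp
  then show False using term_gen[OF M] assms by blast
qed

lemma wo_cases: "word_over 2 w \<Longrightarrow> m < length w \<Longrightarrow> w ! m = LP l \<Longrightarrow> l = 1 \<or> l = 2"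
proof -
  assume a: "word_over 2 w" "m < length w" "w ! m = LP l"
  then have "LP l \<in> set w" by (metis nth_mem)
  with a(1) have "1 \<le> l \<and> l \<le> (2::nat)" unfolding word_over_def by fastforce
  then show ?thesis by linarith
qed



lemma claim:
  assumes wo1: "word_over 2 ws" and wo2: "word_over 2 wr"
    and TA: "lock_must IS {#(ws @ [], True), (wr @ ws, True)#}"
    and TB: "lock_must IS {#(ws @ wr, False), (wr @ [], True)#}"
    and jA: "exec_word IS (take j ws) = Some CA" "CA 1" "0 < j" "j < length ws" "ws ! 0 = LP 1" "ws ! j = LP 1"
    and kB: "exec_word IS (take k wr) = Some D" "D 2" "k < length wr" "\<exists>l<k. wr!l = LP 2 \<or> wr!l = LT 2" "wr ! k = LP 2"
    and b': "\<forall>m<length wr. wr!m = LP 1 \<longrightarrow> (\<exists>l<m. wr!l = LP 1 \<or> wr!l = LT 1)"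
    and d': "\<forall>m<length ws. ws!m = LP 2 \<longrightarrow> (\<exists>l<m. ws!l = LP 2 \<or> ws!l = LT 2)"
  shows "RR ws wr IS p q C \<Longrightarrow> p < length ws \<Longrightarrow> ws!p = LP 1 \<Longrightarrow> q < length wr \<Longrightarrow> wr!q = LP 2 \<Longrightarrow> C 1 \<or> C 2 \<Longrightarrow> False"
proof (induction "(length ws - p) + (length wr - q)" arbitrary: p q C rule: less_induct)
  case less
  note R = less.prems(1) and pl = less.prems(2) and wsp = less.prems(3) and ql = less.prems(4) and wrq = less.prems(5)
  consider "C 1" "C 2" | "C 1" "\<not> C 2" | "\<not> C 1" "C 2" using less.prems(6) by blast
  then show False
  proof cases
    case 1
    then show ?thesis using termR[OF TA R pl ql wsp wrq] by blast
  next
    case 2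
    show ?thesis
    proof (cases "exec_word C (drop q wr)")
      case None
      from exec_stuck[OF None] obtain m C' i where m: "m < length (drop q wr)" "exec_word C (take m (drop q wr)) = Some C'"
        "drop q wr ! m = LP i" "C' i" by blast
      have R': "RR ws wr IS p (q+m) C'" using RR_B[OF R m(2)] m(1) by simp
      have ql': "q + m < length wr" using m(1) by simp
      have wq: "wr ! (q+m) = LP i" using m(3) ql by simp
      show False
      proof (cases "C' 1")
        case True
        show False using termR[OF TA R' pl ql' wsp wq True m(4)] .
      next
        case False
        have "i = 1 \<or> i = 2" using wo_cases[OF wo2 ql' wq] .
        with False m(4) have i2: "i = 2" by auto
        have "m \<noteq> 0"
        proof
          assume "m = 0"
          with m(2) have "C' = C" by simp
          with m(4) i2 2 show False by simp
        qed
        then have lt: "(length ws - p) + (length wr - (q+m)) < (length ws - p) + (length wr - q)"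
          using ql' by simp
        show False using less.hyps[OF lt R' pl wsp ql'] wq i2 m(4) by simp
      qed
    next
      case (Some S)
      have R': "RR ws wr IS p (q + (length wr - q)) S" using RR_B[OF R, of "length wr - q" S] Some ql by simp
      have "lock_step\<^sup>*\<^sup>* ({#(ws @ [], True), (wr @ ws, True)#}, IS) ({#(drop p ws @ [], True), (drop (q + (length wr - q)) wr @ ws, True)#}, S)"
        by (rule RR_reach[OF R'])
      then have r1: "lock_step\<^sup>*\<^sup>* ({#(ws @ [], True), (wr @ ws, True)#}, IS) ({#(drop p ws, True), (ws, True)#}, S)"
        using ql by simp
      have dp: "drop p ws = LP 1 # drop (Suc p) ws" using pl wsp by (metis Cons_nth_drop_Suc)
      show False
      proof (cases "exec_word S (take j ws)")
        case (Some S')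
        have "LP 1 \<in> set (take j ws)" using jA by (metis length_take min.absorb4 nth_mem nth_take)
        then have s1: "S' 1" using exec_lastsym[OF Some jA(1)] jA(2) by blast
        have "lock_step\<^sup>*\<^sup>* ({#(drop p ws, True), (ws, True)#}, S) ({#(drop p ws, True), (drop j ws, True)#}, S')"
          using run2B[OF Some, where v="drop j ws"] by simp
        moreover have "drop j ws = LP 1 # drop (Suc j) ws" using jA by (metis Cons_nth_drop_Suc)
        ultimately have "lock_step\<^sup>*\<^sup>* ({#(drop p ws, True), (ws, True)#}, S) ({#(LP 1 # drop (Suc p) ws, True), (LP 1 # drop (Suc j) ws, True)#}, S')"
          using dp by simp
        with r1 have "lock_step\<^sup>*\<^sup>* ({#(ws @ [], True), (wr @ ws, True)#}, IS) ({#(LP 1 # drop (Suc p) ws, True), (LP 1 # drop (Suc j) ws, True)#}, S')"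
          by (rule rtranclp_trans)
        then show False using term_gen[OF TA] s1 by blast
      next
        case None
        from exec_stuck[OF None] obtain m C' i where m: "m < length (take j ws)" "exec_word S (take m (take j ws)) = Some C'"
          "take j ws ! m = LP i" "C' i" by blast
        have mj: "m < j" using m(1) by simp
        have e: "exec_word S (take m ws) = Some C'" using m(2) mj by simp
        have wm: "ws ! m = LP i" using m(3) mj by simp
        have "lock_step\<^sup>*\<^sup>* ({#(drop p ws, True), (ws, True)#}, S) ({#(drop p ws, True), (drop m ws, True)#}, C')"
          using run2B[OF e, where v="drop m ws"] by simp
        moreover have "drop m ws = LP i # drop (Suc m) ws" using wm mj jA(4) by (metis Cons_nth_drop_Suc less_trans)
        ultimately have "lock_step\<^sup>*\<^sup>* ({#(drop p ws, True), (ws, True)#}, S) ({#(LP 1 # drop (Suc p) ws, True), (LP i # drop (Suc m) ws, True)#}, C')"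
          using dp by simp
        with r1 have reach: "lock_step\<^sup>*\<^sup>* ({#(ws @ [], True), (wr @ ws, True)#}, IS) ({#(LP 1 # drop (Suc p) ws, True), (LP i # drop (Suc m) ws, True)#}, C')"
          by (rule rtranclp_trans)
        show False
        proof (cases "C' 1")
          case True
          then show False using term_gen[OF TA reach] m(4) by blast
        next
          case False
          have ml: "m < length ws" using mj jA(4) by simp
          have "i = 1 \<or> i = 2" using wo_cases[OF wo1 ml wm] .
          with False m(4) have i2: "i = 2" by auto
          show False
          proof (cases "\<exists>l<m. ws!l = LP 2 \<or> ws!l = LT 2")
            case True
            then have sym: "LP 2 \<in> set (take m ws) \<or> LT 2 \<in> set (take m ws)"
              using ml by (metis (no_types, lifting) in_set_conv_nth length_take min.absorb4 nth_take order.strict_trans)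
            obtain E' where E': "exec_word IS (take m ws) = Some E'" using exec_prefix[OF jA(1)] mj by fastforce
            have "E' 2 = C' 2" using exec_lastsym[OF E' e sym] .
            then have "exec_word IS (take (Suc m) ws) = None"
              using exec_block[OF E' ml wm] i2 m(4) by simp
            moreover obtain E'' where "exec_word IS (take (Suc m) ws) = Some E''"
              using exec_prefix[OF jA(1)] mj by (metis Suc_leI)
            ultimately show False by simp
          next
            case False
            then show False using d' ml wm i2 by blast
          qed
        qed
      qed
    qed
  next
    case 3
    show ?thesis
    proof (cases "exec_word C (drop p ws)")
      case None
      from exec_stuck[OF None] obtain m C' i where m: "m < length (drop p ws)" "exec_word C (take m (drop p ws)) = Some C'"
        "drop p ws ! m = LP i" "C' i" by blast
      have R': "RR ws wr IS (p+m) q C'" using RR_A[OF R m(2)] m(1) by simp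
      have pl': "p + m < length ws" using m(1) by simp
      have wp: "ws ! (p+m) = LP i" using m(3) pl by simp
      show False
      proof (cases "C' 2")
        case True
        show False using termR[OF TA R' pl' ql wp wrq m(4) True] .
      next
        case False
        have "i = 1 \<or> i = 2" using wo_cases[OF wo1 pl' wp] .
        with False m(4) have i1: "i = 1" by auto
        have "m \<noteq> 0"
        proof
          assume "m = 0"
          with m(2) have "C' = C" by simp
          with m(4) i1 3 show False by simp
        qed
        then have lt: "(length ws - (p+m)) + (length wr - q) < (length ws - p) + (length wr - q)"
          using pl' by simp
        show False using less.hyps[OF lt R' pl' _ ql wrq] wp i1 m(4) by simp
      qed
    next
      case (Some S)
      have R': "RR ws wr IS (p + (length ws - p)) q S" using RR_A[OF R, of "length ws - p" S] Some pl by simp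
      have "lock_step\<^sup>*\<^sup>* ({#(ws @ wr, False), (wr @ [], True)#}, IS) ({#(drop (p + (length ws - p)) ws @ wr, False), (drop q wr @ [], True)#}, S)"
        by (rule RR_reach[OF R'])
      then have r1: "lock_step\<^sup>*\<^sup>* ({#(ws @ wr, False), (wr @ [], True)#}, IS) ({#(wr, False), (drop q wr, True)#}, S)"
        using pl by simp
      have dq: "drop q wr = LP 2 # drop (Suc q) wr" using ql wrq by (metis Cons_nth_drop_Suc)
      show False
      proof (cases "exec_word S (take k wr)")
        case (Some S')
        have "LP 2 \<in> set (take k wr) \<or> LT 2 \<in> set (take k wr)"
          using kB(4) kB(3) by (metis (no_types, lifting) in_set_conv_nth length_take min.absorb4 nth_take order.strict_trans)
        then have s2: "S' 2" using exec_lastsym[OF Some kB(1)] kB(2) by blast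
        have "lock_step\<^sup>*\<^sup>* ({#(wr, False), (drop q wr, True)#}, S) ({#(drop k wr, False), (drop q wr, True)#}, S')"
          using run2A[OF Some, where v="drop k wr"] by simp
        moreover have "drop k wr = LP 2 # drop (Suc k) wr" using kB by (metis Cons_nth_drop_Suc)
        ultimately have "lock_step\<^sup>*\<^sup>* ({#(wr, False), (drop q wr, True)#}, S) ({#(LP 2 # drop (Suc k) wr, False), (LP 2 # drop (Suc q) wr, True)#}, S')"
          using dq by simp
        with r1 have "lock_step\<^sup>*\<^sup>* ({#(ws @ wr, False), (wr @ [], True)#}, IS) ({#(LP 2 # drop (Suc k) wr, False), (LP 2 # drop (Suc q) wr, True)#}, S')"
          by (rule rtranclp_trans)
        then show False using term_gen[OF TB] s2 by blast
      next
        case None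
        from exec_stuck[OF None] obtain m C' i where m: "m < length (take k wr)" "exec_word S (take m (take k wr)) = Some C'"
          "take k wr ! m = LP i" "C' i" by blast
        have mk: "m < k" using m(1) by simp
        have e: "exec_word S (take m wr) = Some C'" using m(2) mk by simp
        have wm: "wr ! m = LP i" using m(3) mk by simp
        have "lock_step\<^sup>*\<^sup>* ({#(wr, False), (drop q wr, True)#}, S) ({#(drop m wr, False), (drop q wr, True)#}, C')"
          using run2A[OF e, where v="drop m wr"] by simp
        moreover have "drop m wr = LP i # drop (Suc m) wr" using wm mk kB(3) by (metis Cons_nth_drop_Suc less_trans)
        ultimately have "lock_step\<^sup>*\<^sup>* ({#(wr, False), (drop q wr, True)#}, S) ({#(LP i # drop (Suc m) wr, False), (LP 2 # drop (Suc q) wr, True)#}, C')"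
          using dq by simp
        with r1 have reach: "lock_step\<^sup>*\<^sup>* ({#(ws @ wr, False), (wr @ [], True)#}, IS) ({#(LP i # drop (Suc m) wr, False), (LP 2 # drop (Suc q) wr, True)#}, C')"
          by (rule rtranclp_trans)
        show False
        proof (cases "C' 2")
          case True
          then show False using term_gen[OF TB reach] m(4) by blast
        next
          case False
          have ml: "m < length wr" using mk kB(3) by simp
          have "i = 1 \<or> i = 2" using wo_cases[OF wo2 ml wm] .
          with False m(4) have i1: "i = 1" by auto
          show False
          proof (cases "\<exists>l<m. wr!l = LP 1 \<or> wr!l = LT 1")
            case True
            then have sym: "LP 1 \<in> set (take m wr) \<or> LT 1 \<in> set (take m wr)"
              using ml by (metis (no_types, lifting) in_set_conv_nth length_take min.absorb4 nth_take order.strict_trans)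
            obtain E' where E': "exec_word IS (take m wr) = Some E'" using exec_prefix[OF kB(1)] mk by fastforce
            have "E' 1 = C' 1" using exec_lastsym[OF E' e sym] .
            then have "exec_word IS (take (Suc m) wr) = None"
              using exec_block[OF E' ml wm] i1 m(4) by simp
            moreover obtain E'' where "exec_word IS (take (Suc m) wr) = Some E''"
              using exec_prefix[OF kB(1)] mk by (metis Suc_leI)
            ultimately show False by simp
          next
            case False
            then show False using b' ml wm i1 by blast
          qed
        qed
      qed
    qed
  qed
qed



theorem lemma5p6:
  fixes IS :: locks and ws wr :: "lsym list"
  assumes "correct_translation 2 IS ws wr"
      and "has_btype IS ws (BT_PP 1)"
      and "has_btype IS wr (BT_PP 2)"
  shows "\<not> (\<exists>w. ws = LP 1 # w)"
proof
  assume "\<exists>w. ws = LP 1 # w"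
  then obtain w where ws: "ws = LP 1 # w" by blast
  have wo1: "word_over 2 ws" and wo2: "word_over 2 wr"
    and eqv: "\<And>P. sync_must P \<longleftrightarrow> lock_must IS (tr ws wr P)"
    using assms(1) unfolding correct_translation_def by blast+
  have TA: "lock_must IS {#(ws @ [], True), (wr @ ws, True)#}"
    using eqv[of "{#SSend SCheck, SRecv (SSend SCheck)#}"] mustA by (simp add: tr_def)
  have TB: "lock_must IS {#(ws @ wr, False), (wr @ [], True)#}"
    using eqv[of "{#SSend (SRecv SZero), SRecv SCheck#}"] mustB by (simp add: tr_def)
  have TC: "lock_must IS {#(ws @ [], False), (wr @ [], True)#}"
    using eqv[of "{#SSend SZero, SRecv SCheck#}"] mustC by (simp add: tr_def)
  from assms(2) obtain j where sj: "stuck_at IS ws j 1" and pj: "\<exists>l<j. ws ! l = LP 1 \<or> ws ! l = LT 1"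
    unfolding has_btype_def by auto
  from sj obtain CA where jA: "exec_word IS (take j ws) = Some CA" "CA 1" "j < length ws" "ws ! j = LP 1"
    unfolding stuck_at_def by auto
  have j0: "0 < j" using pj by auto
  have ws0: "ws ! 0 = LP 1" using ws by simp
  from assms(3) obtain k where sk: "stuck_at IS wr k 2" and pk: "\<exists>l<k. wr ! l = LP 2 \<or> wr ! l = LT 2"
    unfolding has_btype_def by auto
  from sk obtain D where kB: "exec_word IS (take k wr) = Some D" "D 2" "k < length wr" "wr ! k = LP 2"
    unfolding stuck_at_def by auto
  have R0k: "RR ws wr IS 0 k D" using RR_B[OF RR0, where m=k and C'=D] kB by simp
  have Rj0: "RR ws wr IS j 0 CA" using RR_A[OF RR0, where m=j and C'=CA] jA by simp
  have d': "\<forall>m<length ws. ws!m = LP 2 \<longrightarrow> (\<exists>l<m. ws!l = LP 2 \<or> ws!l = LT 2)"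
  proof (intro allI impI, rule ccontr)
    fix m0 assume m0: "m0 < length ws" "ws ! m0 = LP 2" "\<not> (\<exists>l<m0. ws!l = LP 2 \<or> ws!l = LT 2)"
    have ns: "\<forall>x\<in>set (take m0 ws). x \<noteq> LP 2 \<and> x \<noteq> LT 2"
      using m0(3) by (auto simp: in_set_conv_nth)
    show False
    proof (cases "exec_word D (take m0 (drop 0 ws))")
      case (Some C')
      have "C' 2" using exec_nosym[of D "take m0 ws" C' 2] Some ns kB(2) by simp
      moreover have "RR ws wr IS (0 + m0) k C'" using RR_A[OF R0k Some] m0 by simp
      ultimately show False using termR[OF TC _ m0(1) kB(3) m0(2) kB(4)] kB(2) by simp
    next
      case None
      from exec_stuck[OF None] obtain m C' i where m: "m < length (take m0 (drop 0 ws))"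
        "exec_word D (take m (take m0 (drop 0 ws))) = Some C'" "take m0 (drop 0 ws) ! m = LP i" "C' i" by blast
      have mm: "m < m0" using m(1) by simp
      have e: "exec_word D (take m (drop 0 ws)) = Some C'" using m(2) mm by simp
      have "\<forall>x\<in>set (take m ws). x \<noteq> LP 2 \<and> x \<noteq> LT 2"
        using ns mm by (metis in_set_takeD take_take min.absorb1 less_imp_le)
      then have "C' 2" using exec_nosym[of D "take m ws" C' 2] e kB(2) by simp
      moreover have "RR ws wr IS (0 + m) k C'" using RR_A[OF R0k e] mm m0 by simp
      moreover have "ws ! m = LP i" using m(3) mm by simp
      moreover have "m < length ws" using mm m0(1) by simp
      ultimately show False using termR[OF TC _ _ kB(3) _ kB(4)] m(4) by simp
    qed
  qed
  have b': "\<forall>m<length wr. wr!m = LP 1 \<longrightarrow> (\<exists>l<m. wr!l = LP 1 \<or> wr!l = LT 1)"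
  proof (intro allI impI, rule ccontr)
    fix m0 assume m0: "m0 < length wr" "wr ! m0 = LP 1" "\<not> (\<exists>l<m0. wr!l = LP 1 \<or> wr!l = LT 1)"
    have ns: "\<forall>x\<in>set (take m0 wr). x \<noteq> LP 1 \<and> x \<noteq> LT 1"
      using m0(3) by (auto simp: in_set_conv_nth)
    show False
    proof (cases "exec_word CA (take m0 (drop 0 wr))")
      case (Some C')
      have "C' 1" using exec_nosym[of CA "take m0 wr" C' 1] Some ns jA(2) by simp
      moreover have "RR ws wr IS j (0 + m0) C'" using RR_B[OF Rj0 Some] m0 by simp
      ultimately show False using termR[OF TA _ jA(3) m0(1) jA(4) m0(2)] by simp
    next
      case None
      from exec_stuck[OF None] obtain m C' i where m: "m < length (take m0 (drop 0 wr))"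
        "exec_word CA (take m (take m0 (drop 0 wr))) = Some C'" "take m0 (drop 0 wr) ! m = LP i" "C' i" by blast
      have mm: "m < m0" using m(1) by simp
      have e: "exec_word CA (take m (drop 0 wr)) = Some C'" using m(2) mm by simp
      have "\<forall>x\<in>set (take m wr). x \<noteq> LP 1 \<and> x \<noteq> LT 1"
        using ns mm by (metis in_set_takeD take_take min.absorb1 less_imp_le)
      then have "C' 1" using exec_nosym[of CA "take m wr" C' 1] e jA(2) by simp
      moreover have "RR ws wr IS j (0 + m) C'" using RR_B[OF Rj0 e] mm m0 by simp
      moreover have "wr ! m = LP i" using m(3) mm by simp
      moreover have "m < length wr" using mm m0(1) by simp
      ultimately show False using termR[OF TA _ jA(3) _ jA(4)] m(4) jA(2) by simp
    qed
  qed
  show False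
    using claim[OF wo1 wo2 TA TB jA(1,2) j0 jA(3) ws0 jA(4) kB(1,2,3) pk kB(4) b' d' R0k] ws kB by simp
qed


end
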